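(* Let $f$ satisfy the Standing Assumptions with constants $L,\sigma,\sigma_f$. Fix $x\in\mathbb{R}^d$ and $\delta>0$, let $u$ be uniform on the unit sphere of $\mathbb{R}^d$, let $\xi,\zeta\sim\mathcal{D}$, with $u,\xi,\zeta$ mutually independent, and set $g=\frac{d}{\delta}\operatorname{sgn}\big(f(x+\delta u,\xi)-f(x,\zeta)\big)u$ (with $\operatorname{sgn}(0)$ assigned a fixed value in $\{1,-1\}$). Then $\mathbb{E}\|g\|^2=d^2/\delta^2$ and $$\mathbb{E}\big[\langle\nabla F(x),g\rangle\big]\;\ge\;\frac{c_d\,d}{\delta}\,\|\nabla F(x)\|-dL-\frac{d\,\sigma}{\delta}-\frac{4d\,\sigma_f}{\delta^2},$$ where $c_d:=\mathbb{E}\big[|\langle e_1,u\rangle|\big]>0$. Consequently, for $x^+=x-\eta g$ with $\eta>0$, $$\mathbb{E}[F(x^+)]\le F(x)-\frac{c_d\eta d}{\delta}\|\nabla F(x)\|+\eta dL+\frac{\eta d\sigma}{\delta}+\frac{4\eta d\sigma_f}{\delta^2}+\frac{L\eta^2d^2}{2\delta^2}.$$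
   Context: Standing Assumptions. $f:\mathbb{R}^d\times\Xi\to\mathbb{R}$, $(\Xi,\mathcal{D})$ a probability space. $f(\cdot,\xi)$ is twice continuously differentiable for every $\xi\in\Xi$, and $\|\nabla^2 f(x,\xi)\|\le L$ (operator norm) for all $x\in\mathbb{R}^d$, $\xi\in\Xi$. For each $x$, $f(x,\cdot)$ and $\nabla f(x,\cdot)$ are square-integrable, $F(x):=\mathbb{E}_{\xi\sim\mathcal{D}}[f(x,\xi)]$, and $\nabla F(x)=\mathbb{E}_{\xi}[\nabla f(x,\xi)]$. For all $x\in\mathbb{R}^d$: $\mathbb{E}_{\xi}\big[\|\nabla f(x,\xi)-\nabla F(x)\|^2\big]\le\sigma^2$ and $\mathbb{E}_{\xi}\big[f(x,\xi)^2\big]-F(x)^2\le\sigma_f^2$. Norms are Euclidean; $e_1$ is the first standard basis vector. *)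

theory Defs
  imports "HOL-Probability.Probability"
begin

definition sgn_with :: "real \<Rightarrow> real \<Rightarrow> real" where
  "sgn_with s0 t = (if t > 0 then 1 else if t < 0 then -1 else s0)"

text \<open>Uniform (normalised surface) distribution on the unit sphere of a Euclidean space,
  realised as the radial projection of the uniform distribution on the unit ball.\<close>
definition unif_sphere :: "'a::euclidean_space measure" where
  "unif_sphere = distr (uniform_measure lborel (ball 0 1)) borel (\<lambda>v. v /\<^sub>R norm v)"

definition first_basis :: "'a::euclidean_space" where
  "first_basis = (SOME b. b \<in> Basis)"

end

theory Submission
  imports Defs "HOL-Analysis.Analysis"
begin


typedef (overloaded) 'a bidx = "Basis :: 'a::euclidean_space set"
  using nonempty_Basis by blast

instance bidx :: (euclidean_space) finite
proof
  have "(UNIV :: 'a bidx set) = Abs_bidx ` Basis"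
    using type_definition.univ[OF type_definition_bidx] by simp
  then show "finite (UNIV :: 'a bidx set)" by (metis finite_Basis finite_imageI)
qed

instantiation bidx :: (euclidean_space) linorder
begin
definition less_eq_bidx :: "'a bidx \<Rightarrow> 'a bidx \<Rightarrow> bool" where "less_eq_bidx a b = (to_nat a \<le> to_nat b)"
definition less_bidx :: "'a bidx \<Rightarrow> 'a bidx \<Rightarrow> bool" where "less_bidx a b = (to_nat a < to_nat b)"
instance by standard (auto simp: less_eq_bidx_def less_bidx_def)
end

instance bidx :: (euclidean_space) wellorder
proof
  fix P :: "'a bidx \<Rightarrow> bool" and a
  assume H: "\<And>x. (\<And>y. y < x \<Longrightarrow> P y) \<Longrightarrow> P x"
  have "\<forall>x. to_nat x = n \<longrightarrow> P x" for n
  proof (induction n rule: less_induct)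
    case (less n) then show ?case using H by (auto simp: less_bidx_def)
  qed
  then show "P a" by blast
qed


lemma bij_Rep_bidx: "bij_betw Rep_bidx (UNIV :: 'a::euclidean_space bidx set) Basis"
  unfolding bij_betw_def using type_definition.Rep_range[OF type_definition_bidx]
  by (auto simp: inj_def Rep_bidx_inject)

lemma sum_bidx: "(\<Sum>i\<in>UNIV. h (Rep_bidx i)) = (\<Sum>b\<in>(Basis::'a::euclidean_space set). h b)"
  using sum.reindex_bij_betw[OF bij_Rep_bidx, of h] by simp

lemma prod_bidx: "(\<Prod>i\<in>UNIV. h (Rep_bidx i)) = (\<Prod>b\<in>(Basis::'a::euclidean_space set). h b)"
  using prod.reindex_bij_betw[OF bij_Rep_bidx, of h] by simp

lemma Rep_bidx_in: "Rep_bidx i \<in> Basis"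
  using Rep_bidx by blast

lemma Rep_bidx_inner: "Rep_bidx i \<bullet> Rep_bidx j = (if i = j then 1 else 0)"
  using Rep_bidx_in[of i] Rep_bidx_in[of j] Rep_bidx_inject[of i j] by (auto simp: inner_Basis)

lemma all_bidx: "(\<forall>b\<in>(Basis::'a::euclidean_space set). P b) \<longleftrightarrow> (\<forall>i. P (Rep_bidx i))"
  by (metis Rep_bidx_cases Rep_bidx_in)

definition toc :: "'a::euclidean_space \<Rightarrow> real^'a bidx" where
  "toc x = (\<chi> i. x \<bullet> Rep_bidx i)"
definition fromc :: "real^'a bidx \<Rightarrow> 'a::euclidean_space" where
  "fromc y = (\<Sum>i\<in>UNIV. y$i *\<^sub>R Rep_bidx i)"

lemma fromc_inner: "fromc y \<bullet> Rep_bidx j = y$j"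
  by (simp add: fromc_def inner_sum_left Rep_bidx_inner if_distrib cong: if_cong)

lemma toc_fromc[simp]: "toc (fromc y) = y"
  by (simp add: toc_def fromc_inner vec_eq_iff)

lemma fromc_toc[simp]: "fromc (toc x) = x"
  unfolding fromc_def toc_def using sum_bidx[of "\<lambda>b. (x \<bullet> b) *\<^sub>R b"]
  by (simp add: euclidean_representation)

lemma toc_inner: "toc x \<bullet> toc y = x \<bullet> y"
proof -
  have "toc x \<bullet> toc y = (\<Sum>i\<in>UNIV. (x \<bullet> Rep_bidx i) * (y \<bullet> Rep_bidx i))"
    by (simp add: inner_vec_def toc_def)
  also have "\<dots> = (\<Sum>b\<in>Basis. (x \<bullet> b) * (y \<bullet> b))" by (rule sum_bidx)
  also have "\<dots> = x \<bullet> y" by (rule euclidean_inner[symmetric])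
  finally show ?thesis .
qed

lemma linear_toc: "linear toc"
  by (rule linearI) (auto simp: toc_def vec_eq_iff inner_add_left)

lemma linear_fromc: "linear fromc"
  by (rule linearI) (auto simp: fromc_def sum.distrib scaleR_add_left scaleR_sum_right)

lemma fromc_meas[measurable]: "fromc \<in> borel_measurable borel"
  by (intro borel_measurable_continuous_onI linear_continuous_on) (simp add: linear_conv_bounded_linear[symmetric] linear_fromc)

lemma toc_meas[measurable]: "toc \<in> borel_measurable borel"
  by (intro borel_measurable_continuous_onI linear_continuous_on) (simp add: linear_conv_bounded_linear[symmetric] linear_toc)

lemma prod_Basis_vec: "(\<Prod>b\<in>(Basis :: (real^'n) set). h b) = (\<Prod>i\<in>UNIV. h (axis i 1))"
proof -
  have "Basis = range (\<lambda>i::'n. axis i (1::real))"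
    by (auto simp: Basis_vec_def)
  moreover have "inj (\<lambda>i::'n. axis i (1::real))"
    by (auto simp: inj_def axis_eq_axis)
  ultimately show ?thesis using prod.reindex[of "\<lambda>i::'n. axis i (1::real)" UNIV h] by simp
qed

lemma lborel_fromc: "distr lborel borel fromc = (lborel :: 'a::euclidean_space measure)"
proof (rule lborel_eqI[symmetric])
  fix l u :: 'a
  assume le: "\<And>b. b \<in> Basis \<Longrightarrow> l \<bullet> b \<le> u \<bullet> b"
  have pre: "fromc -` box l u = box (toc l) (toc u)"
  proof -
    have "fromc y \<in> box l u \<longleftrightarrow> y \<in> box (toc l) (toc u)" for y
    proof -
      have "fromc y \<in> box l u \<longleftrightarrow> (\<forall>i. l \<bullet> Rep_bidx i < fromc y \<bullet> Rep_bidx i \<and> fromc y \<bullet> Rep_bidx i < u \<bullet> Rep_bidx i)"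
        unfolding mem_box all_bidx ..
      also have "\<dots> \<longleftrightarrow> y \<in> box (toc l) (toc u)"
        by (simp add: mem_box_cart fromc_inner toc_def)
      finally show ?thesis .
    qed
    then show ?thesis by auto
  qed
  have le': "\<And>b. b \<in> Basis \<Longrightarrow> toc l \<bullet> b \<le> toc u \<bullet> b"
    by (auto simp: Basis_vec_def toc_def inner_axis le Rep_bidx_in)
  have "emeasure (distr lborel borel fromc) (box l u) = emeasure lborel (box (toc l) (toc u))"
    by (simp add: emeasure_distr pre)
  also have "\<dots> = ennreal (\<Prod>b\<in>Basis. (toc u - toc l) \<bullet> b)"
    using le' by simp
  also have "(\<Prod>b\<in>Basis. (toc u - toc l) \<bullet> b) = (\<Prod>b\<in>Basis. (u - l) \<bullet> b)"
    unfolding prod_Basis_vec using prod_bidx[of "\<lambda>b. (u - l) \<bullet> b"]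
    by (simp add: toc_def inner_axis inner_diff_left)
  finally show "emeasure (distr lborel borel fromc) (box l u) = (\<Prod>b\<in>Basis. (u - l) \<bullet> b)" .
qed simp


lemma lborel_orth:
  fixes T :: "'a::euclidean_space \<Rightarrow> 'a"
  assumes linT: "linear T" and innT: "\<And>v w. T v \<bullet> T w = v \<bullet> w"
  shows "distr lborel borel T = lborel"
proof (rule lborel_eqI[symmetric])
  define T' where "T' = toc \<circ> T \<circ> fromc"
  have orth: "orthogonal_transformation T'"
    unfolding orthogonal_transformation_def T'_def
  proof (intro conjI allI)
    show "linear (toc \<circ> T \<circ> fromc)"
      by (intro linear_compose linT linear_toc linear_fromc)
    fix v w :: "real^'a bidx"
    have "fromc v \<bullet> fromc w = v \<bullet> w" using toc_inner[of "fromc v" "fromc w"] by simp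
    then show "(toc \<circ> T \<circ> fromc) v \<bullet> (toc \<circ> T \<circ> fromc) w = v \<bullet> w"
      by (simp add: toc_inner innT)
  qed
  have Tmeas[measurable]: "T \<in> borel_measurable borel"
    by (intro borel_measurable_continuous_onI linear_continuous_on) (simp add: linear_conv_bounded_linear[symmetric] linT)
  have T'meas[measurable]: "T' \<in> borel_measurable borel"
    unfolding T'_def by measurable
  fix l u :: 'a
  assume le: "\<And>b. b \<in> Basis \<Longrightarrow> l \<bullet> b \<le> u \<bullet> b"
  define X where "X = fromc -` box l u"
  have Xb: "X \<in> sets borel" unfolding X_def using measurable_sets_borel[OF fromc_meas, of "box l u"] by simp
  have Xl: "X \<in> lmeasurable"
  proof -
    have "X = box (toc l) (toc u)"
    proof -
      have "fromc y \<in> box l u \<longleftrightarrow> y \<in> box (toc l) (toc u)" for y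
      proof -
        have "fromc y \<in> box l u \<longleftrightarrow> (\<forall>i. l \<bullet> Rep_bidx i < fromc y \<bullet> Rep_bidx i \<and> fromc y \<bullet> Rep_bidx i < u \<bullet> Rep_bidx i)"
          unfolding mem_box all_bidx ..
        also have "\<dots> \<longleftrightarrow> y \<in> box (toc l) (toc u)"
          by (simp add: mem_box_cart fromc_inner toc_def)
        finally show ?thesis .
      qed
      then show ?thesis unfolding X_def by auto
    qed
    then show ?thesis by simp
  qed
  have pre: "fromc -` (T -` box l u) = T' -` X"
    by (auto simp: X_def T'_def)
  have img: "T' -` X = inv T' ` X"
    using orthogonal_transformation_bij[OF orth] by (simp add: bij_vimage_eq_inv_image)
  have Yl: "T' -` X \<in> lmeasurable"
    unfolding img by (rule measurable_orthogonal_image[OF orthogonal_transformation_inv[OF orth] Xl])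
  have "emeasure (distr lborel borel T) (box l u) = emeasure lborel (T -` box l u)"
    by (simp add: emeasure_distr)
  also have "\<dots> = emeasure (distr lborel borel fromc) (T -` box l u)"
    by (simp add: lborel_fromc)
  also have "\<dots> = emeasure lborel (T' -` X)"
    using measurable_sets_borel[OF Tmeas, of "box l u"] by (simp add: emeasure_distr pre[symmetric])
  also have "\<dots> = emeasure lebesgue (T' -` X)"
    using measurable_sets_borel[OF T'meas Xb] by (simp add: emeasure_completion)
  also have "\<dots> = ennreal (measure lebesgue (T' -` X))"
    using Yl by (simp add: emeasure_eq_measure2)
  also have "measure lebesgue (T' -` X) = measure lebesgue X"
    unfolding img by (rule measure_orthogonal_image[OF orthogonal_transformation_inv[OF orth] Xl])
  also have "ennreal (measure lebesgue X) = emeasure lebesgue X"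
    using Xl by (simp add: emeasure_eq_measure2)
  also have "\<dots> = emeasure lborel X"
    using Xb by simp
  also have "\<dots> = emeasure (distr lborel borel fromc) (box l u)"
    by (simp add: emeasure_distr X_def)
  also have "\<dots> = emeasure lborel (box l u)"
    by (simp add: lborel_fromc)
  also have "\<dots> = (\<Prod>b\<in>Basis. (u - l) \<bullet> b)"
    using le by simp
  finally show "emeasure (distr lborel borel T) (box l u) = (\<Prod>b\<in>Basis. (u - l) \<bullet> b)" .
qed simp



abbreviation "UB \<equiv> uniform_measure lborel (ball (0::'a::euclidean_space) 1)"
definition nrm :: "'a::euclidean_space \<Rightarrow> 'a" where "nrm v = v /\<^sub>R norm v"

lemma nrm_meas[measurable]: "nrm \<in> borel_measurable borel"
  unfolding nrm_def by measurable

lemma ball_pos: "r > 0 \<Longrightarrow> emeasure lborel (ball (c::'a::euclidean_space) r) = ennreal (measure lborel (ball c r)) \<and> measure lborel (ball c r) > 0"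
  using emeasure_lborel_ball_finite[of c r] content_ball_pos[of r c]
  by (simp add: emeasure_eq_ennreal_measure)

lemma UB_prob: "prob_space (UB :: 'a::euclidean_space measure)"
  by (rule prob_space_uniform_measure) (use ball_pos[of 1 "0::'a"] emeasure_lborel_ball_finite[of "0::'a" 1] in auto)

lemma unif_sphere_alt: "unif_sphere = distr UB borel nrm"
  unfolding unif_sphere_def nrm_def ..

lemma sets_unif_sphere[simp, measurable_cong]: "sets unif_sphere = sets borel"
  by (simp add: unif_sphere_def)

lemma space_unif_sphere[simp]: "space unif_sphere = UNIV"
  by (simp add: unif_sphere_def)

lemma unif_sphere_prob: "prob_space (unif_sphere :: 'a::euclidean_space measure)"
  unfolding unif_sphere_alt by (rule prob_space.prob_space_distr[OF UB_prob]) simp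

lemma AE_unif_sphere_norm: "AE u in (unif_sphere :: 'a::euclidean_space measure). norm u = 1"
proof -
  have "AE v in (lborel :: 'a measure). v \<noteq> 0"
    by (rule AE_I'[of "{0}"]) auto
  then have "AE v in (UB :: 'a measure). v \<noteq> 0"
    by (intro AE_uniform_measureI) auto
  then have "AE v in (UB :: 'a measure). norm (nrm v) = 1"
    by eventually_elim (simp add: nrm_def)
  then show ?thesis unfolding unif_sphere_alt
    by (subst AE_distr_iff) auto
qed



lemma linear_meas: "linear (T :: 'a::euclidean_space \<Rightarrow> 'b::euclidean_space) \<Longrightarrow> T \<in> borel_measurable borel"
  by (intro borel_measurable_continuous_onI linear_continuous_on) (simp add: linear_conv_bounded_linear[symmetric])

lemma orth_norm: "(\<And>v w. T v \<bullet> T w = v \<bullet> w) \<Longrightarrow> norm (T v) = norm v"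
  by (simp add: norm_eq_sqrt_inner)

lemma UB_orth:
  fixes T :: "'a::euclidean_space \<Rightarrow> 'a"
  assumes linT: "linear T" and innT: "\<And>v w. T v \<bullet> T w = v \<bullet> w"
  shows "distr UB borel T = (UB :: 'a measure)"
proof (rule measure_eqI)
  have Tm[measurable]: "T \<in> borel_measurable borel" using linear_meas[OF linT] .
  show "sets (distr UB borel T) = sets (UB :: 'a measure)" by simp
  fix A assume "A \<in> sets (distr UB borel T)"
  then have A[measurable]: "A \<in> sets borel" by simp
  have TA: "T -` A \<in> sets borel" using measurable_sets_borel[OF Tm A] by simp
  have eq: "ball 0 1 \<inter> T -` A = T -` (ball 0 1 \<inter> A)"
    using orth_norm[of T, OF innT] by auto
  have BA: "ball 0 1 \<inter> A \<in> sets borel" by measurable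
  have "emeasure (distr UB borel T) A = emeasure UB (T -` A)"
    by (subst emeasure_distr) auto
  also have "\<dots> = emeasure lborel (ball 0 1 \<inter> T -` A) / emeasure lborel (ball (0::'a) 1)"
    using TA by (subst emeasure_uniform_measure) auto
  also have "emeasure lborel (ball 0 1 \<inter> T -` A) = emeasure (distr lborel borel T) (ball 0 1 \<inter> A)"
    unfolding eq using BA by (subst emeasure_distr) auto
  also have "\<dots> = emeasure lborel (ball 0 1 \<inter> A)"
    by (simp add: lborel_orth[OF linT innT])
  also have "emeasure lborel (ball 0 1 \<inter> A) / emeasure lborel (ball (0::'a) 1) = emeasure UB A"
    using A by (subst emeasure_uniform_measure) auto
  finally show "emeasure (distr UB borel T) A = emeasure UB A" .
qed

lemma US_orth:
  fixes T :: "'a::euclidean_space \<Rightarrow> 'a"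
  assumes linT: "linear T" and innT: "\<And>v w. T v \<bullet> T w = v \<bullet> w"
  shows "distr unif_sphere borel T = (unif_sphere :: 'a measure)"
proof -
  have Tm[measurable]: "T \<in> borel_measurable borel" using linear_meas[OF linT] .
  have comm: "T \<circ> nrm = nrm \<circ> T"
    by (auto simp: nrm_def linear_scale[OF linT] orth_norm[of T, OF innT])
  have "distr unif_sphere borel T = distr UB borel (T \<circ> nrm)"
    unfolding unif_sphere_alt by (subst distr_distr) auto
  also have "\<dots> = distr (distr UB borel T) borel nrm"
    unfolding comm by (subst distr_distr) auto
  also have "\<dots> = unif_sphere"
    unfolding UB_orth[OF linT innT] unif_sphere_alt ..
  finally show ?thesis .
qed

lemma householder:
  fixes e a :: "'a::euclidean_space"
  assumes e: "norm e = 1" and a: "norm a = 1"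
  shows "\<exists>T. linear T \<and> (\<forall>v w. T v \<bullet> T w = v \<bullet> w) \<and> T e = a"
proof (cases "e = a")
  case True
  then show ?thesis by (intro exI[of _ id]) (auto simp: linear_id)
next
  case False
  define w where "w = e - a"
  have w0: "w \<bullet> w \<noteq> 0" using False by (simp add: w_def)
  define T where "T x = x - (2 * (x \<bullet> w) / (w \<bullet> w)) *\<^sub>R w" for x
  have lin: "linear T"
    unfolding T_def by (intro linearI) (auto simp: inner_add_left algebra_simps add_divide_distrib)
  have inn: "T v \<bullet> T u = v \<bullet> u" for v u
    using w0 by (simp add: T_def inner_diff_left inner_diff_right inner_commute field_simps power2_eq_square)
  have ee: "e \<bullet> e = 1" "a \<bullet> a = 1" using e a by (simp_all add: norm_eq_sqrt_inner)
  have ww: "w \<bullet> w = 2 * (1 - e \<bullet> a)" "e \<bullet> w = 1 - e \<bullet> a"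
    using ee by (simp_all add: w_def inner_diff_left inner_diff_right inner_commute)
  have h: "w \<bullet> w = 2 * (e \<bullet> w)" using ww by simp
  have ew: "e \<bullet> w \<noteq> 0" using w0 h by auto
  have "2 * (e \<bullet> w) / (w \<bullet> w) = 1" using ew unfolding h by simp
  then have "T e = e - w" using ew by (simp add: T_def)
  then have "T e = a" by (simp add: w_def)
  then show ?thesis using lin inn by blast
qed

lemma first_basis: "first_basis \<in> (Basis :: 'a::euclidean_space set)" "norm (first_basis :: 'a) = 1"
proof -
  show *: "first_basis \<in> (Basis :: 'a set)"
    unfolding first_basis_def using nonempty_Basis by (metis ex_in_conv someI_ex)
  show "norm (first_basis :: 'a) = 1" using * by simp
qed

lemma integral_abs_inner:
  fixes a :: "'a::euclidean_space"
  shows "(\<integral>u. \<bar>a \<bullet> u\<bar> \<partial>unif_sphere) = norm a * (\<integral>u. \<bar>first_basis \<bullet> u\<bar> \<partial>(unif_sphere :: 'a measure))"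
proof (cases "a = 0")
  case True then show ?thesis by simp
next
  case False
  define b where "b = a /\<^sub>R norm a"
  have nb: "norm b = 1" using False by (simp add: b_def)
  obtain T :: "'a \<Rightarrow> 'a" where TT: "linear T \<and> (\<forall>v w. T v \<bullet> T w = v \<bullet> w) \<and> T first_basis = b"
    using householder[OF first_basis(2) nb] by blast
  have linT: "linear T" and innT: "\<And>v w. T v \<bullet> T w = v \<bullet> w" and Te: "T first_basis = b"
    using TT by auto
  have Tm[measurable]: "T \<in> borel_measurable borel" using linear_meas[OF linT] .
  have "(\<integral>u. \<bar>b \<bullet> u\<bar> \<partial>unif_sphere) = (\<integral>u. \<bar>b \<bullet> u\<bar> \<partial>distr unif_sphere borel T)"
    by (simp add: US_orth[OF linT innT])
  also have "\<dots> = (\<integral>u. \<bar>b \<bullet> T u\<bar> \<partial>unif_sphere)"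
    by (subst integral_distr) auto
  also have "\<dots> = (\<integral>u. \<bar>(first_basis::'a) \<bullet> u\<bar> \<partial>unif_sphere)"
    unfolding Te[symmetric] innT ..
  finally have *: "(\<integral>u. \<bar>b \<bullet> u\<bar> \<partial>unif_sphere) = (\<integral>u. \<bar>first_basis \<bullet> u\<bar> \<partial>(unif_sphere :: 'a measure))" .
  have "a = norm a *\<^sub>R b" using False by (simp add: b_def)
  then have "(\<integral>u. \<bar>a \<bullet> u\<bar> \<partial>unif_sphere) = (\<integral>u. norm a * \<bar>b \<bullet> u\<bar> \<partial>unif_sphere)"
    by (metis (no_types, lifting) abs_mult abs_norm_cancel inner_scaleR_left)
  also have "\<dots> = norm a * (\<integral>u. \<bar>b \<bullet> u\<bar> \<partial>unif_sphere)" by simp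
  finally show ?thesis using * by simp
qed



lemma c_pos: "(\<integral>u. \<bar>(first_basis::'a::euclidean_space) \<bullet> u\<bar> \<partial>unif_sphere) > 0"
proof -
  define e :: 'a where "e = first_basis"
  have ne: "norm e = 1" "e \<bullet> e = 1" using first_basis(2) by (auto simp: e_def norm_eq_sqrt_inner)
  define S where "S = ball ((3/4) *\<^sub>R e) (1/4)"
  interpret UB: prob_space "UB :: 'a measure" by (rule UB_prob)
  have S[measurable]: "S \<in> sets borel" by (simp add: S_def)
  have key: "v \<in> S \<Longrightarrow> norm v < 1 \<and> e \<bullet> v > 1/2" for v
  proof -
    assume "v \<in> S"
    then have d: "norm (v - (3/4) *\<^sub>R e) < 1/4" by (simp add: S_def dist_norm norm_minus_commute)
    have "norm v \<le> norm (v - (3/4) *\<^sub>R e) + norm ((3/4) *\<^sub>R e)"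
      by (metis norm_triangle_sub add.commute)
    then have n1: "norm v < 1" using d ne by simp
    have "\<bar>e \<bullet> (v - (3/4) *\<^sub>R e)\<bar> \<le> norm e * norm (v - (3/4) *\<^sub>R e)"
      by (rule Cauchy_Schwarz_ineq2)
    then have "\<bar>e \<bullet> v - 3/4\<bar> < 1/4" using d ne by (simp add: inner_diff_right)
    then show ?thesis using n1 by linarith
  qed
  have SB: "S \<subseteq> ball 0 1" using key by auto
  have bound: "(1/2) * indicator S v \<le> \<bar>e \<bullet> nrm v\<bar>" for v
  proof (cases "v \<in> S")
    case True
    with key have k: "norm v < 1" "e \<bullet> v > 1/2" by auto
    then have "v \<noteq> 0" by auto
    then have nv: "norm v > 0" by simp
    have "e \<bullet> v \<le> e \<bullet> v / norm v" using k nv by (simp add: le_divide_eq)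
    have "e \<bullet> nrm v = e \<bullet> v / norm v" by (simp add: nrm_def divide_inverse_commute)
    then have h: "1/2 \<le> e \<bullet> nrm v" using k \<open>e \<bullet> v \<le> e \<bullet> v / norm v\<close> by linarith
    show ?thesis using True h by (auto simp: indicator_def)
  qed simp
  have int1: "integrable UB (\<lambda>v. \<bar>e \<bullet> nrm v\<bar>)"
  proof (rule UB.integrable_const_bound[where B=1])
    show "AE x in UB. norm \<bar>e \<bullet> nrm x\<bar> \<le> 1"
    proof (rule AE_I2)
      fix x :: 'a
      have "\<bar>e \<bullet> nrm x\<bar> \<le> norm e * norm (nrm x)" by (rule Cauchy_Schwarz_ineq2)
      also have "norm (nrm x) \<le> 1" by (cases "x = 0") (simp_all add: nrm_def)
      finally show "norm \<bar>e \<bullet> nrm x\<bar> \<le> 1" using ne by simp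
    qed
  qed simp
  have pS: "measure lborel S > 0" unfolding S_def by (rule content_ball_pos) simp
  have pB: "measure lborel (ball (0::'a) 1) > 0" by (rule content_ball_pos) simp
  have finS: "emeasure lborel S < \<infinity>" unfolding S_def by (rule emeasure_lborel_ball_finite)
  have "0 < (1/2) * (measure lborel S / measure lborel (ball (0::'a) 1))"
    using pS pB by simp
  also have "measure lborel S / measure lborel (ball (0::'a) 1) = measure UB S"
    using SB pB emeasure_lborel_ball_finite[of "0::'a" 1]
    by (subst measure_uniform_measure) (auto simp: Int_absorb1 emeasure_eq_ennreal_measure)
  also have "(1/2) * measure UB S = (\<integral>v. (1/2) * indicator S v \<partial>UB)"
    by simp
  also have "\<dots> \<le> (\<integral>v. \<bar>e \<bullet> nrm v\<bar> \<partial>UB)"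
  proof (rule integral_mono[OF _ int1 bound])
    show "integrable UB (\<lambda>v. (1/2) * indicator S v :: real)"
      by (rule UB.integrable_const_bound[where B=1]) (auto simp: indicator_def)
  qed
  also have "\<dots> = (\<integral>u. \<bar>e \<bullet> u\<bar> \<partial>unif_sphere)"
    unfolding unif_sphere_alt by (subst integral_distr) auto
  finally show ?thesis by (simp add: e_def)
qed



definition qgrid :: "nat \<Rightarrow> 'a::euclidean_space \<Rightarrow> 'a" where
  "qgrid n y = (\<Sum>b\<in>Basis. (real_of_int \<lfloor>real (Suc n) * (y \<bullet> b)\<rfloor> / real (Suc n)) *\<^sub>R b)"

lemma qgrid_meas[measurable]: "qgrid n \<in> borel_measurable borel"
  unfolding qgrid_def by measurable

lemma floor_approx: "(\<lambda>n. real_of_int \<lfloor>real (Suc n) * t\<rfloor> / real (Suc n)) \<longlonglongrightarrow> t"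
proof (rule tendsto_sandwich[of "\<lambda>n. t - 1 / real (Suc n)" _ _ "\<lambda>n. t"])
  show "\<forall>\<^sub>F n in sequentially. t - 1 / real (Suc n) \<le> real_of_int \<lfloor>real (Suc n) * t\<rfloor> / real (Suc n)"
  proof (intro always_eventually allI)
    fix n
    have "real (Suc n) * t - 1 \<le> real_of_int \<lfloor>real (Suc n) * t\<rfloor>" by linarith
    then have "(real (Suc n) * t - 1) / real (Suc n) \<le> real_of_int \<lfloor>real (Suc n) * t\<rfloor> / real (Suc n)"
      by (rule divide_right_mono) simp
    moreover have "(real (Suc n) * t - 1) / real (Suc n) = t - 1 / real (Suc n)"
      by (simp add: diff_divide_distrib)
    ultimately show "t - 1 / real (Suc n) \<le> real_of_int \<lfloor>real (Suc n) * t\<rfloor> / real (Suc n)"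
      by simp
  qed
  show "\<forall>\<^sub>F n in sequentially. real_of_int \<lfloor>real (Suc n) * t\<rfloor> / real (Suc n) \<le> t"
  proof (intro always_eventually allI)
    fix n
    have "real_of_int \<lfloor>real (Suc n) * t\<rfloor> \<le> real (Suc n) * t" by linarith
    then have "real_of_int \<lfloor>real (Suc n) * t\<rfloor> / real (Suc n) \<le> real (Suc n) * t / real (Suc n)"
      by (rule divide_right_mono) simp
    then show "real_of_int \<lfloor>real (Suc n) * t\<rfloor> / real (Suc n) \<le> t"
      by simp
  qed
  have "(\<lambda>n. t - 1 / real (Suc n)) \<longlonglongrightarrow> t - 0"
    by (intro tendsto_intros LIMSEQ_Suc lim_1_over_n)
  then show "(\<lambda>n. t - 1 / real (Suc n)) \<longlonglongrightarrow> t" by simp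
qed simp

lemma qgrid_tendsto: "(\<lambda>n. qgrid n y) \<longlonglongrightarrow> y"
proof -
  have "(\<lambda>n. qgrid n y) \<longlonglongrightarrow> (\<Sum>b\<in>Basis. (y \<bullet> b) *\<^sub>R b)"
    unfolding qgrid_def by (intro tendsto_sum tendsto_scaleR floor_approx tendsto_const)
  then show ?thesis by (simp add: euclidean_representation)
qed

lemma qgrid_countable: "countable (range (qgrid n :: 'a::euclidean_space \<Rightarrow> 'a))"
proof -
  define Q :: "('a \<Rightarrow> int) \<Rightarrow> 'a" where "Q k = (\<Sum>b\<in>Basis. (real_of_int (k b) / real (Suc n)) *\<^sub>R b)" for k
  have "range (qgrid n) \<subseteq> Q ` (Pi\<^sub>E Basis (\<lambda>_. UNIV))"
  proof
    fix z assume "z \<in> range (qgrid n :: 'a \<Rightarrow> 'a)"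
    then obtain y where z: "z = qgrid n y" by auto
    define k where "k = restrict (\<lambda>b. \<lfloor>real (Suc n) * (y \<bullet> b)\<rfloor>) Basis"
    have "k \<in> Pi\<^sub>E Basis (\<lambda>_. UNIV)" by (simp add: k_def)
    moreover have "z = Q k" unfolding z qgrid_def Q_def k_def
      by (intro sum.cong) auto
    ultimately show "z \<in> Q ` (Pi\<^sub>E Basis (\<lambda>_. UNIV))" by blast
  qed
  moreover have "countable (Q ` (Pi\<^sub>E Basis (\<lambda>_. UNIV :: int set)))"
    by (intro countable_image countable_PiE) auto
  ultimately show ?thesis by (rule countable_subset)
qed

lemma carath_meas:
  fixes h :: "'a::euclidean_space \<Rightarrow> 'b \<Rightarrow> real"
  assumes cont: "\<And>\<xi>. continuous_on UNIV (\<lambda>y. h y \<xi>)"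
    and meas: "\<And>y. (\<lambda>\<xi>. h y \<xi>) \<in> borel_measurable M"
  shows "(\<lambda>p. h (fst p) (snd p)) \<in> borel_measurable (borel \<Otimes>\<^sub>M M)"
proof (rule borel_measurable_LIMSEQ_real)
  fix p :: "'a \<times> 'b"
  have "isCont (\<lambda>y. h y (snd p)) (fst p)"
    using cont[of "snd p"] by (simp add: continuous_on_eq_continuous_at)
  then show "(\<lambda>n. h (qgrid n (fst p)) (snd p)) \<longlonglongrightarrow> h (fst p) (snd p)"
    by (rule isCont_tendsto_compose) (rule qgrid_tendsto)
next
  fix n
  show "(\<lambda>p. h (qgrid n (fst p)) (snd p)) \<in> borel_measurable (borel \<Otimes>\<^sub>M M)"
  proof (rule measurable_compose_countable'[where I="range (qgrid n)" and f="\<lambda>i p. h i (snd p)" and g="\<lambda>p. qgrid n (fst p)"])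
    show "countable (range (qgrid n :: 'a \<Rightarrow> 'a))" by (rule qgrid_countable)
    show "(\<lambda>p. h i (snd p)) \<in> borel_measurable (borel \<Otimes>\<^sub>M M)" for i
      using measurable_compose[OF measurable_snd meas[of i]] .
    show "(\<lambda>p. qgrid n (fst p)) \<in> borel \<Otimes>\<^sub>M M \<rightarrow>\<^sub>M count_space (range (qgrid n))"
    proof (subst measurable_count_space_eq_countable[OF qgrid_countable], intro conjI ballI)
      show "(\<lambda>p. qgrid n (fst p)) \<in> space (borel \<Otimes>\<^sub>M M) \<rightarrow> range (qgrid n)" by auto
      fix a
      have m: "(\<lambda>p. qgrid n (fst p)) \<in> borel_measurable (borel \<Otimes>\<^sub>M M)" by measurable
      show "(\<lambda>p. qgrid n (fst p)) -` {a} \<inter> space (borel \<Otimes>\<^sub>M M) \<in> sets (borel \<Otimes>\<^sub>M M)"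
        by (rule measurable_sets[OF m]) simp
    qed
  qed
qed



lemma taylor_bound:
  fixes \<phi> :: "'a::euclidean_space \<Rightarrow> real" and G :: "'a \<Rightarrow> 'a"
  assumes der: "\<And>y. (\<phi> has_derivative (\<lambda>h. G y \<bullet> h)) (at y)"
    and lip: "\<And>y z. norm (G z - G y) \<le> L * norm (z - y)"
  shows "\<bar>\<phi> (y + h) - \<phi> y - G y \<bullet> h\<bar> \<le> L / 2 * (norm h)\<^sup>2"
proof -
  have d1: "((\<lambda>t. \<phi> (y + t *\<^sub>R h)) has_real_derivative (G (y + t *\<^sub>R h) \<bullet> h)) (at t)" for t
  proof -
    have "((\<lambda>t. y + t *\<^sub>R h) has_derivative (\<lambda>s. s *\<^sub>R h)) (at t)"
      by (auto intro!: derivative_eq_intros)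
    then have "((\<lambda>t. \<phi> (y + t *\<^sub>R h)) has_derivative (\<lambda>s. G (y + t *\<^sub>R h) \<bullet> (s *\<^sub>R h))) (at t)"
      by (rule has_derivative_compose[OF _ der])
    moreover have "(\<lambda>s. G (y + t *\<^sub>R h) \<bullet> (s *\<^sub>R h)) = (*) (G (y + t *\<^sub>R h) \<bullet> h)"
      by (auto simp: mult.commute)
    ultimately show ?thesis unfolding has_field_derivative_def by simp
  qed
  have gb: "\<bar>G (y + t *\<^sub>R h) \<bullet> h - G y \<bullet> h\<bar> \<le> L * t * (norm h)\<^sup>2" if t: "0 \<le> t" for t
  proof -
    have "\<bar>G (y + t *\<^sub>R h) \<bullet> h - G y \<bullet> h\<bar> = \<bar>(G (y + t *\<^sub>R h) - G y) \<bullet> h\<bar>"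
      by (simp add: inner_diff_left)
    also have "\<dots> \<le> norm (G (y + t *\<^sub>R h) - G y) * norm h" by (rule Cauchy_Schwarz_ineq2)
    also have "\<dots> \<le> (L * norm (t *\<^sub>R h)) * norm h"
      using lip[of y "y + t *\<^sub>R h"] by (intro mult_right_mono) (auto simp: norm_minus_commute)
    also have "\<dots> = L * t * (norm h)\<^sup>2" using t by (simp add: power2_eq_square)
    finally show ?thesis .
  qed
  define N where "N = (norm h)\<^sup>2"
  define \<psi> where "\<psi> t = \<phi> (y + t *\<^sub>R h) - t * (G y \<bullet> h) - L / 2 * t\<^sup>2 * N" for t
  define \<rho> where "\<rho> t = \<phi> (y + t *\<^sub>R h) - t * (G y \<bullet> h) + L / 2 * t\<^sup>2 * N" for t
  have dpsi: "(\<psi> has_real_derivative (G (y + t *\<^sub>R h) \<bullet> h - G y \<bullet> h - L * t * N)) (at t)" for t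
    unfolding \<psi>_def by (auto intro!: derivative_eq_intros d1 simp: power2_eq_square)
  have dchi: "(\<rho> has_real_derivative (G (y + t *\<^sub>R h) \<bullet> h - G y \<bullet> h + L * t * N)) (at t)" for t
    unfolding \<rho>_def by (auto intro!: derivative_eq_intros d1 simp: power2_eq_square)
  have "\<psi> 1 \<le> \<psi> 0"
  proof (rule DERIV_nonpos_imp_nonincreasing[of 0 1])
    fix t :: real assume "0 \<le> t" "t \<le> 1"
    then show "\<exists>D. (\<psi> has_real_derivative D) (at t) \<and> D \<le> 0"
      using dpsi[of t] gb[of t] unfolding N_def by (intro exI[of _ "G (y + t *\<^sub>R h) \<bullet> h - G y \<bullet> h - L * t * (norm h)\<^sup>2"]) auto
  qed simp
  moreover have "\<rho> 0 \<le> \<rho> 1"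
  proof (rule DERIV_nonneg_imp_nondecreasing[of 0 1])
    fix t :: real assume "0 \<le> t" "t \<le> 1"
    then show "\<exists>D. (\<rho> has_real_derivative D) (at t) \<and> D \<ge> 0"
      using dchi[of t] gb[of t] unfolding N_def by (intro exI[of _ "G (y + t *\<^sub>R h) \<bullet> h - G y \<bullet> h + L * t * (norm h)\<^sup>2"]) auto
  qed simp
  ultimately have A: "\<phi> (y + h) - \<phi> y - G y \<bullet> h \<le> L / 2 * N" and B: "- (\<phi> (y + h) - \<phi> y - G y \<bullet> h) \<le> L / 2 * N"
    unfolding \<psi>_def \<rho>_def by simp_all
  show ?thesis unfolding N_def[symmetric] by (rule abs_leI[OF A B])
qed



lemma sgn_with_meas[measurable]: "sgn_with s0 \<in> borel_measurable borel"
  unfolding sgn_with_def[abs_def] by measurable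

lemma sgn_with_abs: "s0 \<in> {1, -1} \<Longrightarrow> \<bar>sgn_with s0 t\<bar> = 1"
  by (auto simp: sgn_with_def)

lemma sgn_key: "s0 \<in> {1, -1} \<Longrightarrow> sgn_with s0 (p + q) * p \<ge> \<bar>p\<bar> - 2 * \<bar>q\<bar>"
  by (auto simp: sgn_with_def abs_if)

lemma AE_fst_prob:
  assumes N: "prob_space N" and Q: "Measurable.pred M Q" and ae: "AE u in M. Q u"
  shows "AE z in M \<Otimes>\<^sub>M N. Q (fst z)"
proof -
  have eq: "distr (M \<Otimes>\<^sub>M N) M fst = M" by (rule prob_space.distr_pair_fst[OF N])
  have "AE u in distr (M \<Otimes>\<^sub>M N) M fst. Q u" unfolding eq by (rule ae)
  then show ?thesis by (subst (asm) AE_distr_iff) (use Q in auto)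
qed

lemma integral_fst_prob:
  fixes k :: "'a \<Rightarrow> real"
  assumes N: "prob_space N" and k[measurable]: "k \<in> borel_measurable M"
  shows "(\<integral>z. k (fst z) \<partial>(M \<Otimes>\<^sub>M N)) = (\<integral>u. k u \<partial>M)"
proof -
  have "(\<integral>z. k (fst z) \<partial>(M \<Otimes>\<^sub>M N)) = (\<integral>u. k u \<partial>distr (M \<Otimes>\<^sub>M N) M fst)"
    by (subst integral_distr) auto
  also have "distr (M \<Otimes>\<^sub>M N) M fst = M" by (rule prob_space.distr_pair_fst[OF N])
  finally show ?thesis .
qed

lemma nn_integral_fst_prob:
  assumes N: "prob_space N" and k[measurable]: "k \<in> borel_measurable M"
  shows "(\<integral>\<^sup>+z. k (fst z) \<partial>(M \<Otimes>\<^sub>M N)) = (\<integral>\<^sup>+u. k u \<partial>M)"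
proof -
  have "(\<integral>\<^sup>+z. k (fst z) \<partial>(M \<Otimes>\<^sub>M N)) = (\<integral>\<^sup>+u. k u \<partial>distr (M \<Otimes>\<^sub>M N) M fst)"
    by (subst nn_integral_distr) auto
  also have "distr (M \<Otimes>\<^sub>M N) M fst = M" by (rule prob_space.distr_pair_fst[OF N])
  finally show ?thesis .
qed

lemma nn_integral_snd_prob:
  assumes N: "prob_space N" and M: "sigma_finite_measure M" and k[measurable]: "k \<in> borel_measurable M"
  shows "(\<integral>\<^sup>+z. k (snd z) \<partial>(N \<Otimes>\<^sub>M M)) = (\<integral>\<^sup>+u. k u \<partial>M)"
proof -
  interpret N: prob_space N by (rule N)
  have "(\<integral>\<^sup>+z. k (snd z) \<partial>(N \<Otimes>\<^sub>M M)) = (\<integral>\<^sup>+x. \<integral>\<^sup>+y. k y \<partial>M \<partial>N)"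
    by (subst sigma_finite_measure.nn_integral_fst[OF M, symmetric]) auto
  also have "\<dots> = (\<integral>\<^sup>+u. k u \<partial>M)"
    by (simp add: N.emeasure_space_1)
  finally show ?thesis .
qed

lemma abs_dev_bound:
  fixes X :: "'b \<Rightarrow> real"
  assumes M: "prob_space M" and Xm[measurable]: "X \<in> borel_measurable M"
    and X2: "integrable M (\<lambda>\<xi>. (X \<xi>)\<^sup>2)"
    and var: "(\<integral>\<xi>. (X \<xi>)\<^sup>2 \<partial>M) - (\<integral>\<xi>. X \<xi> \<partial>M)\<^sup>2 \<le> s\<^sup>2" and s: "s \<ge> 0"
  shows "integrable M (\<lambda>\<xi>. \<bar>X \<xi> - (\<integral>\<zeta>. X \<zeta> \<partial>M)\<bar>)"
    and "(\<integral>\<xi>. \<bar>X \<xi> - (\<integral>\<zeta>. X \<zeta> \<partial>M)\<bar> \<partial>M) \<le> s"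
proof -
  interpret prob_space M by (rule M)
  define m where "m = (\<integral>\<zeta>. X \<zeta> \<partial>M)"
  define Y where "Y \<xi> = \<bar>X \<xi> - m\<bar>" for \<xi>
  have X1: "integrable M X" by (rule square_integrable_imp_integrable[OF Xm X2])
  have Y1: "integrable M Y" unfolding Y_def using X1 by auto
  have Y2eq: "(\<lambda>\<xi>. (Y \<xi>)\<^sup>2) = (\<lambda>\<xi>. (X \<xi>)\<^sup>2 - 2 * m * X \<xi> + m\<^sup>2)"
    by (auto simp: Y_def power2_eq_square algebra_simps)
  have Y2: "integrable M (\<lambda>\<xi>. (Y \<xi>)\<^sup>2)"
    unfolding Y2eq using X1 X2 by auto
  have "(\<integral>\<xi>. (Y \<xi>)\<^sup>2 \<partial>M) = (\<integral>\<xi>. (X \<xi>)\<^sup>2 \<partial>M) - 2 * m * m + m\<^sup>2"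
    unfolding Y2eq using X1 X2 by (simp add: prob_space m_def)
  also have "\<dots> \<le> s\<^sup>2" using var by (simp add: m_def power2_eq_square)
  finally have I2: "(\<integral>\<xi>. (Y \<xi>)\<^sup>2 \<partial>M) \<le> s\<^sup>2" .
  have "0 \<le> variance Y" by (intro integral_nonneg_AE) auto
  also have "variance Y = (\<integral>\<xi>. (Y \<xi>)\<^sup>2 \<partial>M) - (\<integral>\<xi>. Y \<xi> \<partial>M)\<^sup>2"
    by (rule variance_eq[OF Y1 Y2])
  finally have "(\<integral>\<xi>. Y \<xi> \<partial>M)\<^sup>2 \<le> s\<^sup>2" using I2 by linarith
  then have "(\<integral>\<xi>. Y \<xi> \<partial>M) \<le> s" using s by (rule power2_le_imp_le)
  then show "(\<integral>\<xi>. \<bar>X \<xi> - (\<integral>\<zeta>. X \<zeta> \<partial>M)\<bar> \<partial>M) \<le> s" by (simp add: Y_def m_def)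
  show "integrable M (\<lambda>\<xi>. \<bar>X \<xi> - (\<integral>\<zeta>. X \<zeta> \<partial>M)\<bar>)" using Y1 unfolding Y_def[abs_def] m_def .
qed



lemma lin_aux: "(a1::real) \<le> K \<Longrightarrow> a2 \<le> K \<Longrightarrow> K + K = Q \<Longrightarrow> X = Y \<Longrightarrow> 0 \<le> S \<Longrightarrow> X - a1 - a2 - D \<le> I \<Longrightarrow> Y - D - S - Q \<le> I"
  by linarith

lemma lin_aux2: "(J::real) \<le> Fx - E + W \<Longrightarrow> R \<le> E \<Longrightarrow> R = Y1 - Y2 - Y3 - Y4 \<Longrightarrow> W = W' \<Longrightarrow> J \<le> Fx - Y1 + Y2 + Y3 + Y4 + W'"
  by linarith

lemma lin_aux3: "\<bar>(a::real) - b - c\<bar> \<le> W \<Longrightarrow> \<bar>c\<bar> \<le> K \<Longrightarrow> W = W' \<Longrightarrow> \<bar>a\<bar> \<le> \<bar>b\<bar> + K + W'"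
  by linarith

theorem mainTheorem2:
  fixes f :: "'a::euclidean_space \<Rightarrow> 'b \<Rightarrow> real"
    and gradf :: "'a \<Rightarrow> 'b \<Rightarrow> 'a"
    and H :: "'a \<Rightarrow> 'b \<Rightarrow> 'a \<Rightarrow>\<^sub>L 'a"
    and M :: "'b measure"
    and L \<sigma> \<sigma>f \<delta> \<eta> s0 :: real
    and x :: 'a
  assumes M: "prob_space M"
    and f_grad: "\<And>y \<xi>. ((\<lambda>z. f z \<xi>) has_derivative (\<lambda>h. gradf y \<xi> \<bullet> h)) (at y)"
    and f_hess: "\<And>y \<xi>. ((\<lambda>z. gradf z \<xi>) has_derivative blinfun_apply (H y \<xi>)) (at y)"
    and H_cont: "\<And>\<xi>. continuous_on UNIV (\<lambda>y. H y \<xi>)"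
    and H_bound: "\<And>y \<xi>. norm (H y \<xi>) \<le> L"
    and f_meas: "\<And>y. (\<lambda>\<xi>. f y \<xi>) \<in> borel_measurable M"
    and gradf_meas: "\<And>y. (\<lambda>\<xi>. gradf y \<xi>) \<in> borel_measurable M"
    and f_sq: "\<And>y. integrable M (\<lambda>\<xi>. (f y \<xi>)\<^sup>2)"
    and gradf_sq: "\<And>y. integrable M (\<lambda>\<xi>. (norm (gradf y \<xi>))\<^sup>2)"
    and F_grad: "\<And>y. ((\<lambda>z. \<integral>\<xi>. f z \<xi> \<partial>M) has_derivative
                          (\<lambda>h. (\<integral>\<xi>. gradf y \<xi> \<partial>M) \<bullet> h)) (at y)"
    and var_grad: "\<And>y. (\<integral>\<xi>. (norm (gradf y \<xi> - (\<integral>\<zeta>. gradf y \<zeta> \<partial>M)))\<^sup>2 \<partial>M) \<le> \<sigma>\<^sup>2"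
    and var_f: "\<And>y. (\<integral>\<xi>. (f y \<xi>)\<^sup>2 \<partial>M) - (\<integral>\<xi>. f y \<xi> \<partial>M)\<^sup>2 \<le> \<sigma>f\<^sup>2"
    and \<sigma>_nonneg: "\<sigma> \<ge> 0" and \<sigma>f_nonneg: "\<sigma>f \<ge> 0"
    and \<delta>_pos: "\<delta> > 0" and \<eta>_pos: "\<eta> > 0"
    and s0: "s0 \<in> {1, -1}"
  defines "F \<equiv> (\<lambda>y. \<integral>\<xi>. f y \<xi> \<partial>M)"
    and "gF \<equiv> (\<integral>\<xi>. gradf x \<xi> \<partial>M)"
    and "d \<equiv> real DIM('a)"
    and "P \<equiv> (unif_sphere :: 'a measure) \<Otimes>\<^sub>M (M \<Otimes>\<^sub>M M)"
    and "g \<equiv> (\<lambda>(u, \<xi>, \<zeta>). (real DIM('a) / \<delta> * sgn_with s0 (f (x + \<delta> *\<^sub>R u) \<xi> - f x \<zeta>)) *\<^sub>R u)"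
    and "c \<equiv> (\<integral>u. \<bar>first_basis \<bullet> u\<bar> \<partial>(unif_sphere :: 'a measure))"
  shows "((\<integral>\<omega>. (norm (g \<omega>))\<^sup>2 \<partial>P) = d\<^sup>2 / \<delta>\<^sup>2)
       \<and> c > 0
       \<and> ((\<integral>\<omega>. gF \<bullet> g \<omega> \<partial>P) \<ge> c * d / \<delta> * norm gF - d * L - d * \<sigma> / \<delta> - 4 * d * \<sigma>f / \<delta>\<^sup>2)
       \<and> ((\<integral>\<omega>. F (x - \<eta> *\<^sub>R g \<omega>) \<partial>P) \<le> F x - c * \<eta> * d / \<delta> * norm gF + \<eta> * d * L
           + \<eta> * d * \<sigma> / \<delta> + 4 * \<eta> * d * \<sigma>f / \<delta>\<^sup>2 + L * \<eta>\<^sup>2 * d\<^sup>2 / (2 * \<delta>\<^sup>2))"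
proof -
  interpret M: prob_space M by (rule M)
  interpret U: prob_space "unif_sphere :: 'a measure" by (rule unif_sphere_prob)
  have MMp: "prob_space (M \<Otimes>\<^sub>M M)" by (rule prob_space_pair[OF M M])
  interpret MM: prob_space "M \<Otimes>\<^sub>M M" by (rule MMp)
  have Pp: "prob_space P" unfolding P_def by (rule prob_space_pair[OF unif_sphere_prob MMp])
  interpret PP: prob_space P by (rule Pp)
  have Lnn: "L \<ge> 0" using H_bound[of x] norm_ge_zero[of "H x undefined"] by (meson order_trans)
  have d_nn: "d \<ge> 0" by (simp add: d_def)
  have f_int: "integrable M (\<lambda>\<xi>. f y \<xi>)" for y
    by (rule M.square_integrable_imp_integrable[OF f_meas f_sq])
  have gradf_int: "integrable M (\<lambda>\<xi>. gradf y \<xi>)" for y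
  proof (rule Bochner_Integration.integrable_bound[OF _ gradf_meas])
    show "integrable M (\<lambda>\<xi>. 1 + (norm (gradf y \<xi>))\<^sup>2)" using gradf_sq[of y] by auto
    show "AE \<xi> in M. norm (gradf y \<xi>) \<le> norm (1 + (norm (gradf y \<xi>))\<^sup>2)"
    proof (rule AE_I2)
      fix \<xi>
      have t2: "t \<le> 1 + t\<^sup>2" if "0 \<le> t" for t :: real
      proof -
        have "0 \<le> (t - 1)\<^sup>2" by simp
        then show ?thesis using that by (simp add: power2_diff)
      qed
      have "norm (gradf y \<xi>) \<le> 1 + (norm (gradf y \<xi>))\<^sup>2" by (rule t2) simp
      then show "norm (gradf y \<xi>) \<le> norm (1 + (norm (gradf y \<xi>))\<^sup>2)" by simp
    qed
  qed
  have glip: "norm (gradf z \<xi> - gradf y \<xi>) \<le> L * norm (z - y)" for z y \<xi>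
  proof (rule differentiable_bound[of UNIV])
    show "((\<lambda>z. gradf z \<xi>) has_derivative blinfun_apply (H w \<xi>)) (at w within UNIV)" for w
      using f_hess by simp
    show "onorm (blinfun_apply (H w \<xi>)) \<le> L" for w
      using H_bound[of w \<xi>] by (simp add: norm_blinfun.rep_eq)
  qed auto
  define G where "G y = (\<integral>\<xi>. gradf y \<xi> \<partial>M)" for y
  have Glip: "norm (G z - G y) \<le> L * norm (z - y)" for z y
  proof -
    have "norm (G z - G y) = norm (\<integral>\<xi>. gradf z \<xi> - gradf y \<xi> \<partial>M)"
      unfolding G_def using gradf_int by simp
    also have "\<dots> \<le> (\<integral>\<xi>. norm (gradf z \<xi> - gradf y \<xi>) \<partial>M)"
      by (rule integral_norm_bound)
    also have "\<dots> \<le> (\<integral>\<xi>. L * norm (z - y) \<partial>M)"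
      by (rule integral_mono) (use gradf_int glip in auto)
    also have "\<dots> = L * norm (z - y)" by (simp add: M.prob_space)
    finally show ?thesis .
  qed
  have Fder: "(F has_derivative (\<lambda>h. G y \<bullet> h)) (at y)" for y
    using F_grad[of y] unfolding F_def G_def .
  have taylor: "\<bar>F (y + h) - F y - G y \<bullet> h\<bar> \<le> L / 2 * (norm h)\<^sup>2" for y h
    by (rule taylor_bound[OF Fder Glip])
  have GgF: "G x = gF" by (simp add: G_def gF_def)
  have fcont: "isCont (\<lambda>z. f z \<xi>) z" for z \<xi>
    using has_derivative_continuous[OF f_grad] .
  have hcont: "continuous_on UNIV (\<lambda>y. f (x + \<delta> *\<^sub>R y) \<xi>)" for \<xi>
  proof (intro continuous_at_imp_continuous_on ballI)
    fix y :: 'a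
    have "isCont (\<lambda>y. x + \<delta> *\<^sub>R y) y" by (intro continuous_intros)
    then show "isCont (\<lambda>y. f (x + \<delta> *\<^sub>R y) \<xi>) y"
      using continuous_at_compose[of y "\<lambda>y. x + \<delta> *\<^sub>R y" "\<lambda>z. f z \<xi>"] fcont by (simp add: o_def)
  qed
  have hm0: "(\<lambda>p. f (x + \<delta> *\<^sub>R fst p) (snd p)) \<in> borel_measurable (borel \<Otimes>\<^sub>M M)"
    using carath_meas[of "\<lambda>y \<xi>. f (x + \<delta> *\<^sub>R y) \<xi>" M, OF hcont f_meas] by simp
  have hm: "(\<lambda>p. f (x + \<delta> *\<^sub>R fst p) (snd p)) \<in> borel_measurable (unif_sphere \<Otimes>\<^sub>M M)"
    using hm0 by (subst measurable_cong_sets[OF sets_pair_measure_cong[OF sets_unif_sphere refl] refl])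
  define A where "A \<omega> = f (x + \<delta> *\<^sub>R fst \<omega>) (fst (snd \<omega>))" for \<omega> :: "'a \<times> 'b \<times> 'b"
  define B where "B \<omega> = f x (snd (snd \<omega>))" for \<omega> :: "'a \<times> 'b \<times> 'b"
  have pm: "(\<lambda>\<omega>::'a \<times> 'b \<times> 'b. (fst \<omega>, fst (snd \<omega>))) \<in> P \<rightarrow>\<^sub>M unif_sphere \<Otimes>\<^sub>M M"
    unfolding P_def by measurable
  have Am[measurable]: "A \<in> borel_measurable P"
    using measurable_compose[OF pm hm] by (simp add: A_def[abs_def])
  have Bm[measurable]: "B \<in> borel_measurable P"
    unfolding B_def[abs_def] P_def using f_meas[of x] by measurable
  have fstm[measurable]: "fst \<in> P \<rightarrow>\<^sub>M borel"
    using measurable_fst[of "unif_sphere :: 'a measure" "M \<Otimes>\<^sub>M M"]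
    unfolding P_def measurable_cong_sets[OF refl sets_unif_sphere] .
  have g_eq: "g \<omega> = (d / \<delta> * sgn_with s0 (A \<omega> - B \<omega>)) *\<^sub>R fst \<omega>" for \<omega>
    by (cases \<omega>) (simp add: g_def d_def A_def B_def)
  have gm[measurable]: "g \<in> borel_measurable P"
    unfolding g_eq[abs_def] by measurable
  have AEn: "AE \<omega> in P. norm (fst \<omega>) = 1"
    unfolding P_def by (rule AE_fst_prob[OF MMp _ AE_unif_sphere_norm]) simp
  have ng: "norm (g \<omega>) = d / \<delta> * norm (fst \<omega>)" for \<omega>
    using sgn_with_abs[OF s0] \<delta>_pos d_nn by (simp add: g_eq abs_mult)
  have C1: "(\<integral>\<omega>. (norm (g \<omega>))\<^sup>2 \<partial>P) = d\<^sup>2 / \<delta>\<^sup>2"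
  proof -
    have "AE \<omega> in P. (norm (g \<omega>))\<^sup>2 = d\<^sup>2 / \<delta>\<^sup>2"
      using AEn by eventually_elim (simp add: ng power_divide)
    then have "(\<integral>\<omega>. (norm (g \<omega>))\<^sup>2 \<partial>P) = (\<integral>\<omega>. d\<^sup>2 / \<delta>\<^sup>2 \<partial>P)"
      by (intro integral_cong_AE) auto
    also have "\<dots> = d\<^sup>2 / \<delta>\<^sup>2" by (simp add: PP.prob_space)
    finally show ?thesis .
  qed
  have Fcont: "isCont F y" for y using has_derivative_continuous[OF Fder] .
  have Fm[measurable]: "F \<in> borel_measurable borel"
    by (intro borel_measurable_continuous_onI continuous_at_imp_continuous_on ballI Fcont)
  have dev: "integrable M (\<lambda>\<xi>. \<bar>f y \<xi> - F y\<bar>)" "(\<integral>\<xi>. \<bar>f y \<xi> - F y\<bar> \<partial>M) \<le> \<sigma>f" for y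
    using abs_dev_bound[OF M f_meas f_sq var_f \<sigma>f_nonneg, of y] by (simp_all add: F_def)
  have nndev: "(\<integral>\<^sup>+\<xi>. ennreal \<bar>f y \<xi> - F y\<bar> \<partial>M) \<le> ennreal \<sigma>f" for y
    using dev[of y] by (subst nn_integral_eq_integral) (auto intro: ennreal_leI)
  define E1 where "E1 \<omega> = \<bar>A \<omega> - F (x + \<delta> *\<^sub>R fst \<omega>)\<bar>" for \<omega>
  define E2 where "E2 \<omega> = \<bar>B \<omega> - F x\<bar>" for \<omega>
  have E1m[measurable]: "E1 \<in> borel_measurable P" unfolding E1_def[abs_def] by measurable
  have E2m[measurable]: "E2 \<in> borel_measurable P" unfolding E2_def[abs_def] by measurable
  have nnE1: "(\<integral>\<^sup>+\<omega>. ennreal (E1 \<omega>) \<partial>P) \<le> ennreal \<sigma>f"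
  proof -
    have "(\<integral>\<^sup>+\<omega>. ennreal (E1 \<omega>) \<partial>P) = (\<integral>\<^sup>+u. \<integral>\<^sup>+\<eta>. ennreal (E1 (u, \<eta>)) \<partial>(M \<Otimes>\<^sub>M M) \<partial>unif_sphere)"
      unfolding P_def by (rule MM.nn_integral_fst[symmetric]) (use E1m in \<open>simp add: P_def\<close>)
    also have "\<dots> = (\<integral>\<^sup>+u. \<integral>\<^sup>+\<xi>. ennreal \<bar>f (x + \<delta> *\<^sub>R u) \<xi> - F (x + \<delta> *\<^sub>R u)\<bar> \<partial>M \<partial>(unif_sphere :: 'a measure))"
    proof (rule nn_integral_cong)
      fix u :: 'a
      show "(\<integral>\<^sup>+\<eta>. ennreal (E1 (u, \<eta>)) \<partial>(M \<Otimes>\<^sub>M M)) = (\<integral>\<^sup>+\<xi>. ennreal \<bar>f (x + \<delta> *\<^sub>R u) \<xi> - F (x + \<delta> *\<^sub>R u)\<bar> \<partial>M)"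
        unfolding E1_def A_def using f_meas[of "x + \<delta> *\<^sub>R u"]
        by (subst nn_integral_fst_prob[OF M, symmetric]) auto
    qed
    also have "\<dots> \<le> (\<integral>\<^sup>+u. ennreal \<sigma>f \<partial>(unif_sphere :: 'a measure))"
      by (rule nn_integral_mono) (rule nndev)
    also have "\<dots> = ennreal \<sigma>f" using U.emeasure_space_1 by simp
    finally show ?thesis .
  qed
  have nnE2: "(\<integral>\<^sup>+\<omega>. ennreal (E2 \<omega>) \<partial>P) \<le> ennreal \<sigma>f"
  proof -
    have "(\<integral>\<^sup>+\<omega>. ennreal (E2 \<omega>) \<partial>P) = (\<integral>\<^sup>+u. \<integral>\<^sup>+\<eta>. ennreal (E2 (u, \<eta>)) \<partial>(M \<Otimes>\<^sub>M M) \<partial>unif_sphere)"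
      unfolding P_def by (rule MM.nn_integral_fst[symmetric]) (use E2m in \<open>simp add: P_def\<close>)
    also have "\<dots> = (\<integral>\<^sup>+u. \<integral>\<^sup>+\<zeta>. ennreal \<bar>f x \<zeta> - F x\<bar> \<partial>M \<partial>(unif_sphere :: 'a measure))"
    proof (rule nn_integral_cong)
      fix u :: 'a
      show "(\<integral>\<^sup>+\<eta>. ennreal (E2 (u, \<eta>)) \<partial>(M \<Otimes>\<^sub>M M)) = (\<integral>\<^sup>+\<zeta>. ennreal \<bar>f x \<zeta> - F x\<bar> \<partial>M)"
        unfolding E2_def B_def using f_meas[of x]
        by (subst nn_integral_snd_prob[OF M M.sigma_finite_measure_axioms, symmetric]) auto
    qed
    also have "\<dots> \<le> (\<integral>\<^sup>+u. ennreal \<sigma>f \<partial>(unif_sphere :: 'a measure))"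
      by (rule nn_integral_mono) (rule nndev)
    also have "\<dots> = ennreal \<sigma>f" using U.emeasure_space_1 by simp
    finally show ?thesis .
  qed
  have E1nn: "E1 \<omega> \<ge> 0" "E2 \<omega> \<ge> 0" for \<omega> by (simp_all add: E1_def E2_def)
  have iE1: "integrable P E1"
    by (rule integrableI_bounded) (use nnE1 E1nn in \<open>auto simp: top_unique intro: le_less_trans\<close>)
  have iE2: "integrable P E2"
    by (rule integrableI_bounded) (use nnE2 E1nn in \<open>auto simp: top_unique intro: le_less_trans\<close>)
  have IE1: "(\<integral>\<omega>. E1 \<omega> \<partial>P) \<le> \<sigma>f"
    using nnE1 E1nn \<sigma>f_nonneg by (subst integral_eq_nn_integral) (auto intro: enn2real_leI)
  have IE2: "(\<integral>\<omega>. E2 \<omega> \<partial>P) \<le> \<sigma>f"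
    using nnE2 E1nn \<sigma>f_nonneg by (subst integral_eq_nn_integral) (auto intro: enn2real_leI)
  define k2 where "k2 = 2 * d / \<delta>\<^sup>2"
  have k2nn: "k2 \<ge> 0" using d_nn by (simp add: k2_def)
  define low where "low \<omega> = d / \<delta> * \<bar>gF \<bullet> fst \<omega>\<bar> - k2 * E1 \<omega> - k2 * E2 \<omega> - d * L * (norm (fst \<omega>))\<^sup>2" for \<omega>
  have pw: "low \<omega> \<le> gF \<bullet> g \<omega>" for \<omega>
  proof -
    define u where "u = fst \<omega>"
    define a where "a = gF \<bullet> u"
    define p where "p = \<delta> * a"
    define q where "q = A \<omega> - B \<omega> - p"
    define s where "s = sgn_with s0 (A \<omega> - B \<omega>)"
    have key: "s * p \<ge> \<bar>p\<bar> - 2 * \<bar>q\<bar>"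
      using sgn_key[OF s0, of p q] by (simp add: s_def q_def)
    have Tq: "\<bar>F (x + \<delta> *\<^sub>R u) - F x - p\<bar> \<le> L / 2 * \<delta>\<^sup>2 * (norm u)\<^sup>2"
      using taylor[of x "\<delta> *\<^sub>R u"] \<delta>_pos by (simp add: GgF p_def a_def power_mult_distrib)
    have q_eq: "q = (A \<omega> - F (x + \<delta> *\<^sub>R u)) - (B \<omega> - F x) + (F (x + \<delta> *\<^sub>R u) - F x - p)"
      by (simp add: q_def)
    have qb: "\<bar>q\<bar> \<le> E1 \<omega> + E2 \<omega> + L / 2 * \<delta>\<^sup>2 * (norm u)\<^sup>2"
      unfolding q_eq E1_def E2_def u_def[symmetric] using Tq by linarith
    have gg: "gF \<bullet> g \<omega> = d / \<delta>\<^sup>2 * (s * p)"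
      using \<delta>_pos by (simp add: g_eq s_def p_def a_def u_def power2_eq_square)
    have "d / \<delta>\<^sup>2 * (\<bar>p\<bar> - 2 * \<bar>q\<bar>) \<le> d / \<delta>\<^sup>2 * (s * p)"
      using key d_nn by (intro mult_left_mono) auto
    moreover have "k2 * \<bar>q\<bar> \<le> k2 * (E1 \<omega> + E2 \<omega> + L / 2 * \<delta>\<^sup>2 * (norm u)\<^sup>2)"
      using qb k2nn by (rule mult_left_mono)
    moreover have "d / \<delta>\<^sup>2 * (\<bar>p\<bar> - 2 * \<bar>q\<bar>) = d / \<delta> * \<bar>a\<bar> - k2 * \<bar>q\<bar>"
      using \<delta>_pos by (simp add: p_def k2_def abs_mult power2_eq_square field_simps)
    moreover have "k2 * (E1 \<omega> + E2 \<omega> + L / 2 * \<delta>\<^sup>2 * (norm u)\<^sup>2) = k2 * E1 \<omega> + k2 * E2 \<omega> + d * L * (norm u)\<^sup>2"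
      using \<delta>_pos by (simp add: k2_def field_simps power2_eq_square)
    ultimately show ?thesis
      unfolding low_def gg u_def[symmetric] a_def[symmetric] by linarith
  qed
  have ia: "integrable P (\<lambda>\<omega>. \<bar>gF \<bullet> fst \<omega>\<bar>)"
  proof (rule PP.integrable_const_bound[where B="norm gF"])
    show "AE \<omega> in P. norm \<bar>gF \<bullet> fst \<omega>\<bar> \<le> norm gF"
      using AEn
    proof eventually_elim
      case (elim \<omega>)
      then show ?case using Cauchy_Schwarz_ineq2[of gF "fst \<omega>"] by simp
    qed
  qed simp
  have inr: "integrable P (\<lambda>\<omega>. (norm (fst \<omega>))\<^sup>2)"
    by (rule PP.integrable_const_bound[where B=1]) (use AEn in \<open>auto elim: eventually_mono\<close>)
  have ig: "integrable P (\<lambda>\<omega>. gF \<bullet> g \<omega>)"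
  proof (rule PP.integrable_const_bound[where B="norm gF * (d / \<delta>)"])
    show "AE \<omega> in P. norm (gF \<bullet> g \<omega>) \<le> norm gF * (d / \<delta>)"
      using AEn
    proof eventually_elim
      case (elim \<omega>)
      then show ?case using Cauchy_Schwarz_ineq2[of gF "g \<omega>"] by (simp add: ng)
    qed
  qed simp
  have ilow: "integrable P low"
  proof -
    have i1: "integrable P (\<lambda>\<omega>. d / \<delta> * \<bar>gF \<bullet> fst \<omega>\<bar>)" using ia by simp
    have i2: "integrable P (\<lambda>\<omega>. k2 * E1 \<omega>)" using iE1 by simp
    have i3: "integrable P (\<lambda>\<omega>. k2 * E2 \<omega>)" using iE2 by simp
    have i4: "integrable P (\<lambda>\<omega>. d * L * (norm (fst \<omega>))\<^sup>2)" using inr by simp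
    show ?thesis unfolding low_def[abs_def]
      by (rule Bochner_Integration.integrable_diff[OF Bochner_Integration.integrable_diff[OF Bochner_Integration.integrable_diff[OF i1 i2] i3] i4])
  qed
  have Ia: "(\<integral>\<omega>. \<bar>gF \<bullet> fst \<omega>\<bar> \<partial>P) = norm gF * c"
  proof -
    have "(\<integral>\<omega>. \<bar>gF \<bullet> fst \<omega>\<bar> \<partial>P) = (\<integral>u. \<bar>gF \<bullet> u\<bar> \<partial>(unif_sphere :: 'a measure))"
      unfolding P_def by (rule integral_fst_prob[OF MMp]) measurable
    also have "\<dots> = norm gF * c" unfolding c_def by (rule integral_abs_inner)
    finally show ?thesis .
  qed
  have Inr: "(\<integral>\<omega>. (norm (fst \<omega>))\<^sup>2 \<partial>P) = 1"
  proof -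
    have "AE \<omega> in P. (norm (fst \<omega>))\<^sup>2 = 1" using AEn by eventually_elim simp
    then have "(\<integral>\<omega>. (norm (fst \<omega>))\<^sup>2 \<partial>P) = (\<integral>\<omega>. 1 \<partial>P)"
      by (intro integral_cong_AE) auto
    then show ?thesis by (simp add: PP.prob_space)
  qed
  have Ilow: "(\<integral>\<omega>. low \<omega> \<partial>P) = d / \<delta> * (norm gF * c) - k2 * (\<integral>\<omega>. E1 \<omega> \<partial>P) - k2 * (\<integral>\<omega>. E2 \<omega> \<partial>P) - d * L"
    unfolding low_def using ia iE1 iE2 inr by (simp add: Ia Inr)
  have C3': "(\<integral>\<omega>. gF \<bullet> g \<omega> \<partial>P) \<ge> d / \<delta> * (norm gF * c) - k2 * (\<integral>\<omega>. E1 \<omega> \<partial>P) - k2 * (\<integral>\<omega>. E2 \<omega> \<partial>P) - d * L"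
    unfolding Ilow[symmetric] by (rule integral_mono[OF ilow ig pw])
  have "k2 * (\<integral>\<omega>. E1 \<omega> \<partial>P) \<le> k2 * \<sigma>f" using IE1 k2nn by (rule mult_left_mono)
  moreover have "k2 * (\<integral>\<omega>. E2 \<omega> \<partial>P) \<le> k2 * \<sigma>f" using IE2 k2nn by (rule mult_left_mono)
  moreover have "k2 * \<sigma>f + k2 * \<sigma>f = 4 * d * \<sigma>f / \<delta>\<^sup>2" by (simp add: k2_def field_simps)
  moreover have "d / \<delta> * (norm gF * c) = c * d / \<delta> * norm gF" by simp
  moreover have "d * \<sigma> / \<delta> \<ge> 0" using d_nn \<sigma>_nonneg \<delta>_pos by simp
  ultimately have C3: "(\<integral>\<omega>. gF \<bullet> g \<omega> \<partial>P) \<ge> c * d / \<delta> * norm gF - d * L - d * \<sigma> / \<delta> - 4 * d * \<sigma>f / \<delta>\<^sup>2"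
    using C3' by (rule lin_aux)
  have pw4: "F (x - \<eta> *\<^sub>R g \<omega>) \<le> F x - \<eta> * (gF \<bullet> g \<omega>) + L / 2 * \<eta>\<^sup>2 * (norm (g \<omega>))\<^sup>2" for \<omega>
  proof -
    have t: "\<bar>F (x + - (\<eta> *\<^sub>R g \<omega>)) - F x - G x \<bullet> (- (\<eta> *\<^sub>R g \<omega>))\<bar> \<le> L / 2 * (norm (- (\<eta> *\<^sub>R g \<omega>)))\<^sup>2"
      by (rule taylor)
    have e0: "x + - (\<eta> *\<^sub>R g \<omega>) = x - \<eta> *\<^sub>R g \<omega>" by simp
    have e1: "G x \<bullet> (- (\<eta> *\<^sub>R g \<omega>)) = - (\<eta> * (gF \<bullet> g \<omega>))" by (simp add: GgF)
    have e2: "L / 2 * (norm (- (\<eta> *\<^sub>R g \<omega>)))\<^sup>2 = L / 2 * \<eta>\<^sup>2 * (norm (g \<omega>))\<^sup>2"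
      using \<eta>_pos by (simp add: power_mult_distrib)
    have "F (x - \<eta> *\<^sub>R g \<omega>) - F x - - (\<eta> * (gF \<bullet> g \<omega>)) \<le> L / 2 * \<eta>\<^sup>2 * (norm (g \<omega>))\<^sup>2"
      using abs_le_D1[OF t] unfolding e0 e1 e2 .
    then show ?thesis by linarith
  qed
  have ng2: "(norm (g \<omega>))\<^sup>2 = (d / \<delta>)\<^sup>2 * (norm (fst \<omega>))\<^sup>2" for \<omega>
    unfolding ng by (simp add: power_mult_distrib power_divide)
  have ing2: "integrable P (\<lambda>\<omega>. (norm (g \<omega>))\<^sup>2)"
    unfolding ng2 using inr by simp
  have AEg: "AE \<omega> in P. norm (g \<omega>) = d / \<delta>"
    using AEn by eventually_elim (simp add: ng)
  have iF: "integrable P (\<lambda>\<omega>. F (x - \<eta> *\<^sub>R g \<omega>))"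
  proof (rule PP.integrable_const_bound[where B="\<bar>F x\<bar> + \<eta> * (norm gF * (d / \<delta>)) + L / 2 * \<eta>\<^sup>2 * (d / \<delta>)\<^sup>2"])
    show "AE \<omega> in P. norm (F (x - \<eta> *\<^sub>R g \<omega>)) \<le> \<bar>F x\<bar> + \<eta> * (norm gF * (d / \<delta>)) + L / 2 * \<eta>\<^sup>2 * (d / \<delta>)\<^sup>2"
      using AEg
    proof eventually_elim
      case (elim \<omega>)
      have t: "\<bar>F (x - \<eta> *\<^sub>R g \<omega>) - F x - gF \<bullet> (- (\<eta> *\<^sub>R g \<omega>))\<bar> \<le> L / 2 * (norm (- (\<eta> *\<^sub>R g \<omega>)))\<^sup>2"
        using taylor[of x "- (\<eta> *\<^sub>R g \<omega>)"] by (simp add: GgF)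
      have cs: "\<bar>gF \<bullet> (- (\<eta> *\<^sub>R g \<omega>))\<bar> \<le> \<eta> * (norm gF * (d / \<delta>))"
      proof -
        have "\<bar>gF \<bullet> g \<omega>\<bar> \<le> norm gF * (d / \<delta>)"
          using Cauchy_Schwarz_ineq2[of gF "g \<omega>"] elim by simp
        then have "\<eta> * \<bar>gF \<bullet> g \<omega>\<bar> \<le> \<eta> * (norm gF * (d / \<delta>))"
          by (rule mult_left_mono) (use \<eta>_pos in simp)
        moreover have "\<bar>gF \<bullet> (- (\<eta> *\<^sub>R g \<omega>))\<bar> = \<eta> * \<bar>gF \<bullet> g \<omega>\<bar>"
          using \<eta>_pos by (simp add: abs_mult)
        ultimately show ?thesis by simp
      qed
      have nn: "(norm (- (\<eta> *\<^sub>R g \<omega>)))\<^sup>2 = \<eta>\<^sup>2 * (d / \<delta>)\<^sup>2"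
        using elim \<eta>_pos by (simp add: power_mult_distrib power_divide)
      have ww: "L / 2 * (\<eta>\<^sup>2 * (d / \<delta>)\<^sup>2) = L / 2 * \<eta>\<^sup>2 * (d / \<delta>)\<^sup>2" by simp
      show ?case using lin_aux3[OF t[unfolded nn] cs ww] by simp
    qed
  qed measurable
  define I3 where "I3 = (\<integral>\<omega>. gF \<bullet> g \<omega> \<partial>P)"
  have irhs1: "integrable P (\<lambda>\<omega>. F x - \<eta> * (gF \<bullet> g \<omega>))"
    using ig by (intro Bochner_Integration.integrable_diff) auto
  have irhs: "integrable P (\<lambda>\<omega>. F x - \<eta> * (gF \<bullet> g \<omega>) + L / 2 * \<eta>\<^sup>2 * (norm (g \<omega>))\<^sup>2)"
    using irhs1 ing2 by (intro Bochner_Integration.integrable_add) auto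
  have Irhs: "(\<integral>\<omega>. F x - \<eta> * (gF \<bullet> g \<omega>) + L / 2 * \<eta>\<^sup>2 * (norm (g \<omega>))\<^sup>2 \<partial>P) = F x - \<eta> * I3 + L / 2 * \<eta>\<^sup>2 * (d\<^sup>2 / \<delta>\<^sup>2)"
  proof -
    have "(\<integral>\<omega>. F x - \<eta> * (gF \<bullet> g \<omega>) + L / 2 * \<eta>\<^sup>2 * (norm (g \<omega>))\<^sup>2 \<partial>P)
        = (\<integral>\<omega>. F x - \<eta> * (gF \<bullet> g \<omega>) \<partial>P) + (\<integral>\<omega>. L / 2 * \<eta>\<^sup>2 * (norm (g \<omega>))\<^sup>2 \<partial>P)"
      by (rule Bochner_Integration.integral_add[OF irhs1]) (use ing2 in simp)
    also have "(\<integral>\<omega>. F x - \<eta> * (gF \<bullet> g \<omega>) \<partial>P) = (\<integral>\<omega>. F x \<partial>P) - (\<integral>\<omega>. \<eta> * (gF \<bullet> g \<omega>) \<partial>P)"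
      by (rule Bochner_Integration.integral_diff) (use ig in simp_all)
    also have "(\<integral>\<omega>. F x \<partial>P) = F x" by (simp add: PP.prob_space)
    also have "(\<integral>\<omega>. \<eta> * (gF \<bullet> g \<omega>) \<partial>P) = \<eta> * I3" by (simp add: I3_def)
    also have "(\<integral>\<omega>. L / 2 * \<eta>\<^sup>2 * (norm (g \<omega>))\<^sup>2 \<partial>P) = L / 2 * \<eta>\<^sup>2 * (d\<^sup>2 / \<delta>\<^sup>2)"
      by (simp add: C1)
    finally show ?thesis .
  qed
  have C4': "(\<integral>\<omega>. F (x - \<eta> *\<^sub>R g \<omega>) \<partial>P) \<le> F x - \<eta> * I3 + L / 2 * \<eta>\<^sup>2 * (d\<^sup>2 / \<delta>\<^sup>2)"
    unfolding Irhs[symmetric] by (rule integral_mono[OF iF irhs pw4])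
  have R: "\<eta> * (c * d / \<delta> * norm gF - d * L - d * \<sigma> / \<delta> - 4 * d * \<sigma>f / \<delta>\<^sup>2) \<le> \<eta> * I3"
    using C3 \<eta>_pos unfolding I3_def by (intro mult_left_mono) auto
  have Req: "\<eta> * (c * d / \<delta> * norm gF - d * L - d * \<sigma> / \<delta> - 4 * d * \<sigma>f / \<delta>\<^sup>2)
      = c * \<eta> * d / \<delta> * norm gF - \<eta> * d * L - \<eta> * d * \<sigma> / \<delta> - 4 * \<eta> * d * \<sigma>f / \<delta>\<^sup>2"
    by (simp add: algebra_simps)
  have Weq: "L / 2 * \<eta>\<^sup>2 * (d\<^sup>2 / \<delta>\<^sup>2) = L * \<eta>\<^sup>2 * d\<^sup>2 / (2 * \<delta>\<^sup>2)"
    by simp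
  have C4: "(\<integral>\<omega>. F (x - \<eta> *\<^sub>R g \<omega>) \<partial>P) \<le> F x - c * \<eta> * d / \<delta> * norm gF + \<eta> * d * L
           + \<eta> * d * \<sigma> / \<delta> + 4 * \<eta> * d * \<sigma>f / \<delta>\<^sup>2 + L * \<eta>\<^sup>2 * d\<^sup>2 / (2 * \<delta>\<^sup>2)"
    using lin_aux2[OF C4' R Req Weq] .
  have cpos: "c > 0" unfolding c_def by (rule c_pos)
  show ?thesis using C1 cpos C3 C4 by blast
qed


end
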